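(* Let $f$ and $h$ be the sequences defined in the context, and let $\varphi=(1+\sqrt5)/2$. Then: (a) $h$ is nondecreasing on $\mathbb{N}$. (b) $h(n)\le n$ for all $n\ge 0$. (c) $h(n+1)\in\{h(n),h(n)+1\}$ for all $n\ge 0$. (d) For all $n\ge 0$: $h(n+1)=h(n)$ if and only if $f(n+1)=h(n)$. (e) For all $n\ge 0$: $h(n+1)=h(n)+1$ if and only if $f(n+1)=h(n)+n+1$. (f) For all $n\ge 1$: $h(h(n))+h(n+1)=n+2$. (g) For all $n\ge 0$: $f(f(n))=n$. (h) For all $n\ge 1$: $h(h(n)+n)=n+1$. (i) For all $n\ge 1$: $h(n)=\lfloor n\varphi\rfloor-n+1$. (j) There are no three distinct integers $n_1<n_2<n_3$ in $\mathbb{N}$ with $h(n_1)=h(n_2)=h(n_3)$. (k) For all $n\ge 0$: $h(n+2)>h(n)$. (l) $h:\mathbb{N}\to\mathbb{N}$ is surjective. (m) $f:\mathbb{N}\to\mathbb{N}$ is surjective. (n) $f$ is injective. (o) For all $n\ge 6$: $h(n)\le n-2$. (p) For all $n\ge 0$: if $f(n+1)>h(n)$, then $f(j)>h(n)$ for every $j\ge n+1$. (q) There are no integers $k\ge 2$ and $\ell$ such that $f(k-1)=\ell$ and $f(k)=\ell+1$.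
   Context: $\mathbb{N}=\{0,1,2,\dots\}$. The sequence $f:\mathbb{N}\to\mathbb{N}$ is defined greedily: $f(0)=0$, and for $n\ge1$, $f(n)$ is the least natural number such that (i) $f(n)\notin\{f(0),f(1),\dots,f(n-1)\}$ and (ii) $\sum_{1\le i\le n} f(i)$ is divisible by $n$. The sequence $h:\mathbb{N}\to\mathbb{N}$ is defined by $h(0)=0$ and $h(n)=\frac1n\,(f(1)+\cdots+f(n))$ for $n\ge1$ (an integer by (ii)). The first values are $f=0,1,3,2,6,8,4,11,5,14,16,\dots$ and $h=0,1,2,2,3,4,4,5,5,6,7,\dots$. *)

theory Defs
  imports Complex_Main
begin

text \<open>flist n = [f 0, f 1, ..., f n], built greedily: the next value is the least
natural number not yet used such that the sum f 1 + ... + f (n+1) is divisible by n+1.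
(f 0 = 0 contributes nothing to the sum.)\<close>
fun flist :: "nat \<Rightarrow> nat list" where
  "flist 0 = [0]"
| "flist (Suc n) = flist n @
     [LEAST m. m \<notin> set (flist n) \<and> Suc n dvd (sum_list (flist n) + m)]"

definition f :: "nat \<Rightarrow> nat" where
  "f n = flist n ! n"

definition h :: "nat \<Rightarrow> nat" where
  "h n = (if n = 0 then 0 else (\<Sum>i=1..n. f i) div n)"

definition phi :: real where
  "phi = (1 + sqrt 5) / 2"

end

theory Submission
  imports Defs
begin


definition al :: real where "al = (sqrt 5 - 1) / 2"

lemma phi_al: "phi = 1 + al"
  unfolding phi_def al_def by (simp add: field_simps)

lemma sqrt5_sq: "sqrt 5 * sqrt 5 = (5::real)"
  by simp

lemma al_sq: "al * al = 1 - al"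
proof -
  have "al * al = (sqrt 5 * sqrt 5 - 2 * sqrt 5 + 1) / 4" unfolding al_def by (simp add: field_simps)
  also have "\<dots> = 1 - al" unfolding al_def sqrt5_sq by (simp add: field_simps)
  finally show ?thesis .
qed

lemma al_bounds: "0.6 < al" "al < 2/3"
proof -
  have "2.2 < sqrt 5" by (rule real_less_rsqrt) (simp add: power2_eq_square)
  then show "0.6 < al" unfolding al_def by simp
  have "sqrt 5 < 7/3" by (rule real_less_lsqrt) (simp_all add: power2_eq_square)
  then show "al < 2/3" unfolding al_def by simp
qed

lemma mod5_sq: "(x::nat)^2 mod 5 = 0 \<Longrightarrow> x mod 5 = 0"
proof -
  assume a: "x^2 mod 5 = 0"
  have e: "x^2 mod 5 = (x mod 5)^2 mod 5" by (simp add: power_mod)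
  have "x mod 5 < 5" by simp
  then have "x mod 5 = 0 \<or> x mod 5 = 1 \<or> x mod 5 = 2 \<or> x mod 5 = 3 \<or> x mod 5 = 4" by linarith
  then show ?thesis using a e by (auto simp: power2_eq_square)
qed

lemma nat_sq5: "(x::nat)^2 = 5*y^2 \<Longrightarrow> y = 0"
proof (induction y arbitrary: x rule: less_induct)
  case (less y)
  have "x^2 mod 5 = 0" using less.prems by simp
  then have "x mod 5 = 0" by (rule mod5_sq)
  then obtain x' where x': "x = 5 * x'" by (metis mod_eq_0_iff_dvd dvdE)
  have "y^2 = 5 * x'^2" using less.prems x' by (simp add: power2_eq_square)
  then have "y^2 mod 5 = 0" by simp
  then have "y mod 5 = 0" by (rule mod5_sq)
  then obtain y' where y': "y = 5 * y'" by (metis mod_eq_0_iff_dvd dvdE)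
  have "x'^2 = 5 * y'^2" using \<open>y^2 = 5 * x'^2\<close> y' by (simp add: power2_eq_square)
  show "y = 0"
  proof (rule ccontr)
    assume "y \<noteq> 0"
    then have "y' < y" using y' by simp
    then have "y' = 0" using less.IH \<open>x'^2 = 5 * y'^2\<close> by blast
    then show False using y' \<open>y \<noteq> 0\<close> by simp
  qed
qed

lemma al_irr: "n > 0 \<Longrightarrow> real n * al \<noteq> of_int m"
proof
  assume n: "n > 0" and e: "real n * al = of_int m"
  have e2: "real n * sqrt 5 = 2 * of_int m + real n" using e unfolding al_def by (simp add: field_simps)
  have pos: "0 < real n * sqrt 5" using n by simp
  define x where "x = nat (2*m + int n)"
  have rx: "real x = 2 * of_int m + real n" unfolding x_def using e2 pos
    by (smt (verit) of_int_of_nat_eq of_nat_nat of_int_add of_int_mult of_int_numeral of_int_less_iff of_int_0)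
  have "(real x)^2 = 5 * (real n)^2" unfolding rx e2[symmetric] by (simp add: power2_eq_square algebra_simps)
  then have "real (x^2) = real (5 * n^2)" by simp
  then have "x^2 = 5*n^2" by (simp only: of_nat_eq_iff)
  then have "n = 0" by (rule nat_sq5)
  then show False using n by simp
qed

definition H :: "nat \<Rightarrow> nat" where "H n = nat \<lceil>real n * al\<rceil>"

lemma al_pos: "0 < al" using al_bounds by simp

lemma H_real: "real (H n) = of_int \<lceil>real n * al\<rceil>"
proof -
  have "0 \<le> real n * al" using al_pos by simp
  then have "0 \<le> \<lceil>real n * al\<rceil>" by simp
  then show ?thesis unfolding H_def by simp
qed

lemma H_lower: "real (H n) - 1 < real n * al"
  using ceiling_correct[of "real n * al"] H_real by simp
lemma H_upper: "real n * al \<le> real (H n)"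
  using ceiling_correct[of "real n * al"] H_real by simp
lemma H_upper_strict: "n > 0 \<Longrightarrow> real n * al < real (H n)"
proof -
  assume "n > 0"
  then have "real n * al \<noteq> real (H n)" using al_irr[of n "\<lceil>real n * al\<rceil>"] H_real[of n] by simp
  then show ?thesis using H_upper[of n] by simp
qed

lemma H_eqI: "real k - 1 < real n * al \<Longrightarrow> real n * al \<le> real k \<Longrightarrow> H n = k"
proof -
  assume a: "real k - 1 < real n * al" "real n * al \<le> real k"
  have "\<lceil>real n * al\<rceil> = int k" by (rule ceiling_unique) (use a in auto)
  then show ?thesis unfolding H_def by simp
qed



lemma H0: "H 0 = 0" by (simp add: H_def)

lemma real_Suc_al: "real (Suc n) * al = real n * al + al" by (simp add: distrib_right)

lemma H_pos: "n > 0 \<Longrightarrow> H n \<ge> 1"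
proof -
  assume "n > 0"
  then have "0 < real n * al" using al_pos by simp
  then have "0 < real (H n)" using H_upper[of n] by linarith
  then show ?thesis by simp
qed

lemma H_le: "H n \<le> n"
proof -
  have "real n * al \<le> real n" using al_bounds by (simp add: mult_left_le)
  then have "real (H n) < real n + 1" using H_lower[of n] by linarith
  then have "real (H n) < real (Suc n)" by simp
  then show ?thesis by (simp only: of_nat_less_iff)
qed

lemma H_step: "H (Suc n) = H n \<or> H (Suc n) = Suc (H n)"
proof -
  have a1: "real (H (Suc n)) < real (H n) + 2"
    using H_lower[of "Suc n"] H_upper[of n] al_bounds real_Suc_al[of n] by linarith
  have a2: "real (H n) < real (H (Suc n)) + 1"
    using H_lower[of n] H_upper[of "Suc n"] al_bounds real_Suc_al[of n] by linarith
  have "real (H (Suc n)) < real (H n + 2)" using a1 by simp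
  then have b1: "H (Suc n) < H n + 2" by (simp only: of_nat_less_iff)
  have "real (H n) < real (H (Suc n) + 1)" using a2 by simp
  then have b2: "H n < H (Suc n) + 1" by (simp only: of_nat_less_iff)
  from b1 b2 show ?thesis by linarith
qed

lemma caseB:
  assumes p: "p \<ge> 1" and inc: "H (Suc p) = Suc (H p)"
  shows "H (H p + p) = Suc p \<and> H (Suc (H p + p)) = Suc p"
proof -
  define c where "c = H p"
  define x where "x = real p * al"
  have d1: "x < real c" unfolding x_def c_def using H_upper_strict[of p] p by simp
  have d2: "real c < x + al" unfolding x_def c_def
    using H_lower[of "Suc p"] inc real_Suc_al[of p] by simp
  have "(real c + real p) * al - (real p + al * (real c - x)) = real p * (al*al - (1 - al))"
    unfolding x_def by (simp add: algebra_simps)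
  then have idt: "(real c + real p) * al = real p + al * (real c - x)" using al_sq by simp
  have b1: "0 < al * (real c - x)" using d1 al_pos by simp
  have "al * (real c - x) < al * al" using d2 al_pos by (intro mult_strict_left_mono) auto
  then have b2: "al * (real c - x) < 1 - al" using al_sq by simp
  have "H (c + p) = Suc p"
    by (rule H_eqI) (use idt b1 b2 al_bounds in auto)
  moreover have "H (Suc (c + p)) = Suc p"
  proof (rule H_eqI)
    have e: "real (Suc (c + p)) * al = (real c + real p) * al + al" by (simp add: distrib_right)
    show "real (Suc p) - 1 < real (Suc (c + p)) * al" using e idt b1 al_bounds by simp
    show "real (Suc (c + p)) * al \<le> real (Suc p)" using e idt b2 by simp
  qed
  ultimately show ?thesis unfolding c_def by simp
qed

lemma caseA:
  assumes st: "H (Suc p) = H p"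
  shows "H p \<ge> 1 \<and> H (H p) = Suc (H (H p - 1)) \<and> H (H p - 1) + H p = Suc p"
proof -
  define c where "c = H p"
  define x where "x = real p * al"
  have c1: "c \<ge> 1" unfolding c_def using H_pos[of "Suc p"] st by simp
  have cle: "c \<le> Suc p" unfolding c_def using H_le[of "Suc p"] st by simp
  have d1: "x + al < real c" unfolding x_def c_def
    using H_upper_strict[of "Suc p"] st real_Suc_al[of p] by simp
  have d2: "real c - 1 < x" unfolding x_def c_def using H_lower[of p] by simp
  have "real c * al - (real p + 1 - real c) - ((1 + al) * (real c - x) - 1) = real p * (al*al - (1 - al))"
    unfolding x_def by (simp add: algebra_simps)
  then have idt: "real c * al = (real p + 1 - real c) + ((1 + al) * (real c - x) - 1)" using al_sq by simp
  have "(1 + al) * al < (1 + al) * (real c - x)" using d1 al_pos by (intro mult_strict_left_mono) auto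
  then have b1: "0 < (1 + al) * (real c - x) - 1" using al_sq by (simp add: algebra_simps)
  have "(1 + al) * (real c - x) < (1 + al) * 1" using d2 al_pos by (intro mult_strict_left_mono) auto
  then have b2: "(1 + al) * (real c - x) - 1 < al" by simp
  define k where "k = Suc p - c"
  have rk: "real k = real p + 1 - real c" unfolding k_def using cle by (simp add: of_nat_diff)
  have hc: "H c = Suc k"
    by (rule H_eqI) (use idt b1 b2 rk al_bounds in auto)
  have hc1: "H (c - 1) = k"
  proof (rule H_eqI)
    have e: "real (c - 1) * al = real c * al - al" using c1 by (simp add: of_nat_diff algebra_simps)
    show "real k - 1 < real (c - 1) * al" using e idt b1 rk al_bounds by linarith
    show "real (c - 1) * al \<le> real k" using e idt b2 rk al_bounds by linarith
  qed
  show ?thesis using c1 hc hc1 cle unfolding c_def[symmetric] k_def by simp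
qed



definition F :: "nat \<Rightarrow> nat" where
  "F n = (if n = 0 then 0 else if H n = H (n-1) then H (n-1) else H (n-1) + n)"

lemma F0: "F 0 = 0" by (simp add: F_def)
lemma F_small: "H (Suc p) = H p \<Longrightarrow> F (Suc p) = H p" by (simp add: F_def)
lemma F_large: "H (Suc p) = Suc (H p) \<Longrightarrow> F (Suc p) = H p + Suc p" by (simp add: F_def)

lemma H_mono: "mono H"
  unfolding mono_iff_le_Suc using H_step by (metis le_refl lessI less_imp_le)

lemma H_monoD: "m \<le> n \<Longrightarrow> H m \<le> H n" using H_mono by (simp add: monoD)

lemma F_inv: "F (F n) = n"
proof (cases n)
  case 0 then show ?thesis by (simp add: F0)
next
  case (Suc p)
  show ?thesis
  proof (cases "H (Suc p) = H p")
    case True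
    have A: "H p \<ge> 1 \<and> H (H p) = Suc (H (H p - 1)) \<and> H (H p - 1) + H p = Suc p"
      using caseA[OF True] .
    then have e: "H p = Suc (H p - 1)" by simp
    have "F (H p) = H (H p - 1) + H p"
      using F_large[of "H p - 1"] A e by metis
    then show ?thesis using F_small[OF True] A Suc by simp
  next
    case False
    then have L: "H (Suc p) = Suc (H p)" using H_step by blast
    show ?thesis
    proof (cases "p = 0")
      case True
      then show ?thesis using F_large[OF L] Suc H0 by simp
    next
      case False
      then have B: "H (H p + p) = Suc p \<and> H (Suc (H p + p)) = Suc p" using caseB[OF _ L] by simp
      have "F (Suc (H p + p)) = Suc p" using F_small[of "H p + p"] B by simp
      then show ?thesis using F_large[OF L] Suc by simp
    qed
  qed
qed

lemma F_inj: "inj F" by (metis F_inv injI)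

lemma F_sum: "(\<Sum>i=1..n. F i) = n * H n"
proof (induction n)
  case 0 then show ?case by (simp add: H0)
next
  case (Suc n)
  have "(\<Sum>i=1..Suc n. F i) = n * H n + F (Suc n)" using Suc by simp
  also have "\<dots> = Suc n * H (Suc n)"
    using H_step[of n] F_small[of n] F_large[of n] by auto
  finally show ?case .
qed

lemma sum_list_F: "sum_list (map F [0..<Suc n]) = (\<Sum>i=1..n. F i)"
  by (induction n) (auto simp: F0)

lemma used: "H (Suc n) = Suc (H n) \<Longrightarrow> H n \<in> F ` {..n}"
proof -
  assume L: "H (Suc n) = Suc (H n)"
  define j where "j = F (H n)"
  have Fj: "F j = H n" unfolding j_def by (rule F_inv)
  have "j \<le> n"
  proof (rule ccontr)
    assume "\<not> j \<le> n"
    then obtain q where q: "j = Suc q" "q \<ge> n" by (metis Suc_le_eq le_eq_less_or_eq not_le Suc_pred' less_Suc_eq_le not0_implies_Suc le_less_trans le0)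
    consider "H (Suc q) = H q" | "H (Suc q) = Suc (H q)" using H_step by blast
    then show False
    proof cases
      case 1
      then have "H q = H n" using F_small[OF 1] Fj q by simp
      moreover have "q \<noteq> n" using 1 L by auto
      then have "H q \<ge> H (Suc n)" using q H_monoD by simp
      ultimately show False using L by simp
    next
      case 2
      then have "H q + Suc q = H n" using F_large[OF 2] Fj q by simp
      then show False using H_le[of n] q by simp
    qed
  qed
  then show ?thesis using Fj by (metis atMost_iff image_eqI)
qed

lemma dvd_small: "(d::int) dvd x \<Longrightarrow> \<bar>x\<bar> < d \<Longrightarrow> x = 0"
  using dvd_imp_le_int by force

lemma greedy_step: "(LEAST m. m \<notin> F ` {..n} \<and> Suc n dvd (n * H n + m)) = F (Suc n)"
proof (rule Least_equality)
  have "F (Suc n) \<notin> F ` {..n}" using F_inj by (auto simp: inj_eq)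
  moreover have eq: "n * H n + F (Suc n) = Suc n * H (Suc n)"
    using H_step[of n] F_small[of n] F_large[of n] by auto
  moreover have "Suc n dvd (n * H n + F (Suc n))" by (metis dvd_triv_left eq)
  ultimately show "F (Suc n) \<notin> F ` {..n} \<and> Suc n dvd (n * H n + F (Suc n))" by simp
next
  fix m assume m: "m \<notin> F ` {..n} \<and> Suc n dvd (n * H n + m)"
  show "F (Suc n) \<le> m"
  proof (rule ccontr)
    assume lt: "\<not> F (Suc n) \<le> m"
    have "int (Suc n) dvd int (n * H n + m)" using m by (simp only: int_dvd_int_iff)
    moreover have "int (Suc n) dvd int (Suc n * H n)" by (metis dvd_triv_left int_dvd_int_iff)
    ultimately have "int (Suc n) dvd int (Suc n * H n) - int (n * H n + m)" by (rule dvd_diff[rotated])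
    then have dv: "int (Suc n) dvd int (H n) - int m" by (simp add: algebra_simps)
    have hle: "H n \<le> n" by (rule H_le)
    consider "H (Suc n) = H n" | "H (Suc n) = Suc (H n)" using H_step by blast
    then show False
    proof cases
      case 1
      then have "m < H n" using lt F_small[OF 1] by simp
      then have "int (H n) - int m = 0" using dv hle by (intro dvd_small) auto
      then show False using \<open>m < H n\<close> by simp
    next
      case 2
      then have "m < H n + Suc n" using lt F_large[OF 2] by simp
      then have "int (H n) - int m = 0" using dv hle by (intro dvd_small) auto
      then have "m = H n" by simp
      then show False using m used[OF 2] by simp
    qed
  qed
qed

lemma flist_F: "flist n = map F [0..<Suc n]"
proof (induction n)
  case 0 then show ?case by (simp add: F0)
next
  case (Suc n)
  have s: "set (map F [0..<Suc n]) = F ` {..n}" by (simp only: set_map set_upt atLeast0LessThan lessThan_Suc_atMost)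
  have "flist (Suc n) = map F [0..<Suc n] @ [LEAST m. m \<notin> set (map F [0..<Suc n]) \<and> Suc n dvd (sum_list (map F [0..<Suc n]) + m)]"
    by (simp only: flist.simps Suc.IH)
  then have "flist (Suc n) = map F [0..<Suc n] @ [F (Suc n)]"
    by (simp only: s sum_list_F F_sum greedy_step)
  moreover have "[0..<Suc (Suc n)] = [0..<Suc n] @ [Suc n]" by simp
  ultimately show ?case by (simp del: upt_Suc flist.simps)
qed

lemma f_F: "f = F"
  by (rule ext) (simp add: f_def flist_F nth_append del: upt_Suc)

lemma h_H: "h = H"
proof (rule ext)
  fix n show "h n = H n"
    unfolding h_def f_F F_sum by (simp add: H0)
qed



lemma idt1: "real c * al = (real n - real c) + (1 + al) * (real c - real n * al)"
proof -
  have "real c * al - ((real n - real c) + (1 + al) * (real c - real n * al)) = real n * (al*al - (1 - al))"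
    by (simp add: algebra_simps)
  then show ?thesis using al_sq by simp
qed

lemma prop_f: assumes n: "n \<ge> 1" shows "H (H n) + H (n+1) = n + 2"
proof -
  define c where "c = H n"
  define x where "x = real n * al"
  have cle: "c \<le> n" unfolding c_def by (rule H_le)
  have d1: "x < real c" unfolding x_def c_def using H_upper_strict[of n] n by simp
  have idt: "real c * al = (real n - real c) + (1 + al) * (real c - x)" unfolding x_def by (rule idt1)
  have b0: "0 < (1 + al) * (real c - x)" using d1 al_pos by simp
  define k where "k = n - c"
  have rk: "real k = real n - real c" unfolding k_def using cle by (simp add: of_nat_diff)
  consider "H (Suc n) = H n" | "H (Suc n) = Suc (H n)" using H_step by blast
  then show ?thesis
  proof cases
    case 1
    have d2: "x + al < real c" unfolding x_def c_def
      using H_upper_strict[of "Suc n"] 1 real_Suc_al[of n] by simp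
    have "(1 + al) * al < (1 + al) * (real c - x)" using d2 al_pos by (intro mult_strict_left_mono) auto
    then have b1: "1 < (1 + al) * (real c - x)" using al_sq by (simp add: algebra_simps)
    have d3: "real c - 1 < x" unfolding x_def c_def using H_lower[of n] by simp
    have "(1 + al) * (real c - x) < (1 + al) * 1" using d3 al_pos by (intro mult_strict_left_mono) auto
    then have b2: "(1 + al) * (real c - x) < 1 + al" by simp
    have "H c = Suc (Suc k)"
      by (rule H_eqI; simp only: of_nat_Suc; insert idt b1 b2 rk al_bounds; linarith)
    then show ?thesis using 1 cle unfolding c_def k_def by simp
  next
    case 2
    have d2: "real c < x + al" unfolding x_def c_def
      using H_lower[of "Suc n"] 2 real_Suc_al[of n] by simp
    have "(1 + al) * (real c - x) < (1 + al) * al" using d2 al_pos by (intro mult_strict_left_mono) auto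
    then have b1: "(1 + al) * (real c - x) < 1" using al_sq by (simp add: algebra_simps)
    have "H c = Suc k"
      by (rule H_eqI; simp only: of_nat_Suc; insert idt b0 b1 rk al_bounds; linarith)
    then show ?thesis using 2 cle unfolding c_def k_def by simp
  qed
qed

lemma prop_h: assumes n: "n \<ge> 1" shows "H (H n + n) = n + 1"
proof -
  define c where "c = H n"
  define x where "x = real n * al"
  have d1: "x < real c" unfolding x_def c_def using H_upper_strict[of n] n by simp
  have d2: "real c - 1 < x" unfolding x_def c_def using H_lower[of n] by simp
  have "(real c + real n) * al - (real n + al * (real c - x)) = real n * (al*al - (1 - al))"
    unfolding x_def by (simp add: algebra_simps)
  then have idt: "(real c + real n) * al = real n + al * (real c - x)" using al_sq by simp
  have b1: "0 < al * (real c - x)" using d1 al_pos by simp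
  have "al * (real c - x) < al * 1" using d2 al_pos by (intro mult_strict_left_mono) auto
  then have b2: "al * (real c - x) < 1" using al_bounds by (simp only: mult_1_right)
  have "H (c + n) = Suc n"
    by (rule H_eqI) (use idt b1 b2 in auto)
  then show ?thesis unfolding c_def by simp
qed

lemma prop_i: assumes n: "n \<ge> 1" shows "int (H n) = \<lfloor>real n * phi\<rfloor> - int n + 1"
proof -
  have e: "real n * phi = real n + real n * al" unfolding phi_al by (simp add: algebra_simps)
  have hp: "H n \<ge> 1" using H_pos n by simp
  have "\<lfloor>real n * phi\<rfloor> = int (H n) - 1 + int n"
  proof (rule floor_unique)
    show "real_of_int (int (H n) - 1 + int n) \<le> real n * phi"
      using e H_upper_strict[of n] H_lower[of n] n hp by (simp add: of_nat_diff)
    show "real n * phi < real_of_int (int (H n) - 1 + int n) + 1"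
      using e H_upper_strict[of n] n by simp
  qed
  then show ?thesis by simp
qed

lemma prop_k: "H (n+2) > H n"
proof -
  have e: "real (n+2) * al = real n * al + 2 * al" by (simp add: algebra_simps)
  have "real (H n) < real (H (n+2))"
    using e H_lower[of n] H_upper[of "n+2"] al_bounds by linarith
  then show ?thesis by simp
qed

lemma prop_o: assumes n: "n \<ge> 6" shows "H n \<le> n - 2"
proof -
  have "6 * (1 - al) \<le> real n * (1 - al)" using n al_bounds by (intro mult_right_mono) auto
  then have "real n * al \<le> real n - 2" using al_bounds by (simp add: algebra_simps)
  then have "real (H n) < real n - 1" using H_lower[of n] by linarith
  then have "real (H n + 1) < real n" by simp
  then have "H n + 1 < n" by (simp only: of_nat_less_iff)
  then show ?thesis by simp
qed

lemma H_surj: "surj H"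
proof -
  have "\<exists>n. H n = k" for k
  proof (induction k)
    case 0 then show ?case using H0 by blast
  next
    case (Suc k)
    then obtain n where n: "H n = k" by blast
    show ?case
    proof (cases "H (Suc n) = Suc k")
      case True then show ?thesis by blast
    next
      case False
      then have "H (Suc n) = k" using H_step[of n] n by auto
      then have "H (Suc (Suc n)) = Suc k" using H_step[of "Suc n"] prop_k[of n] n by auto
      then show ?thesis by blast
    qed
  qed
  then show ?thesis by (metis surjI)
qed

lemma prop_p: "F (n+1) > H n \<Longrightarrow> j \<ge> n+1 \<Longrightarrow> F j > H n"
proof -
  assume a: "F (n+1) > H n" and j: "j \<ge> n+1"
  have L: "H (Suc n) = Suc (H n)" using a H_step[of n] F_small[of n] by auto
  obtain q where q: "j = Suc q" "q \<ge> n" using j by (metis Suc_eq_plus1 Suc_le_D Suc_le_mono)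
  consider "H (Suc q) = H q" | "H (Suc q) = Suc (H q)" using H_step by blast
  then show ?thesis
  proof cases
    case 1
    then have "q \<noteq> n" using L by auto
    then have "H q \<ge> H (Suc n)" using q H_monoD by simp
    then show ?thesis using F_small[OF 1] q L by simp
  next
    case 2
    have "H q \<ge> H n" using q H_monoD by simp
    then show ?thesis using F_large[OF 2] q by simp
  qed
qed

lemma prop_q: "\<not> (\<exists>k l. k \<ge> 2 \<and> F (k-1) = l \<and> F k = l + 1)"
proof
  assume "\<exists>k l. k \<ge> 2 \<and> F (k-1) = l \<and> F k = l + 1"
  then obtain k where k: "k \<ge> 2" "F k = F (k-1) + 1" by blast
  obtain p where p: "k = Suc (Suc p)" using k(1) by (metis add_2_eq_Suc le_Suc_ex)
  have e: "F (Suc (Suc p)) = F (Suc p) + 1" using k p by simp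
  consider "H (Suc p) = H p" | "H (Suc p) = Suc (H p)" using H_step by blast
  then show False
  proof cases
    case 1
    consider "H (Suc (Suc p)) = H (Suc p)" | "H (Suc (Suc p)) = Suc (H (Suc p))" using H_step by blast
    then show False
      by cases (use e 1 F_small[OF 1] F_small[of "Suc p"] F_large[of "Suc p"] in auto)
  next
    case 2
    consider "H (Suc (Suc p)) = H (Suc p)" | "H (Suc (Suc p)) = Suc (H (Suc p))" using H_step by blast
    then show False
      by cases (use e 2 F_large[OF 2] F_small[of "Suc p"] F_large[of "Suc p"] in auto)
  qed
qed


theorem theorem2:
  shows "mono h
    \<and> (\<forall>n. h n \<le> n)
    \<and> (\<forall>n. h (n+1) \<in> {h n, h n + 1})
    \<and> (\<forall>n. h (n+1) = h n \<longleftrightarrow> f (n+1) = h n)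
    \<and> (\<forall>n. h (n+1) = h n + 1 \<longleftrightarrow> f (n+1) = h n + n + 1)
    \<and> (\<forall>n\<ge>1. h (h n) + h (n+1) = n + 2)
    \<and> (\<forall>n. f (f n) = n)
    \<and> (\<forall>n\<ge>1. h (h n + n) = n + 1)
    \<and> (\<forall>n\<ge>1. int (h n) = \<lfloor>real n * phi\<rfloor> - int n + 1)
    \<and> \<not> (\<exists>n1 n2 n3. n1 < n2 \<and> n2 < n3 \<and> h n1 = h n2 \<and> h n2 = h n3)
    \<and> (\<forall>n. h (n+2) > h n)
    \<and> surj h
    \<and> surj f
    \<and> inj f
    \<and> (\<forall>n\<ge>6. h n \<le> n - 2)
    \<and> (\<forall>n. f (n+1) > h n \<longrightarrow> (\<forall>j\<ge>n+1. f j > h n))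
    \<and> \<not> (\<exists>k l. k \<ge> 2 \<and> f (k-1) = l \<and> f k = l + 1)"
proof -
  have p1: "mono H" by (rule H_mono)
  have p2: "\<forall>n. H n \<le> n" using H_le by blast
  have p3: "\<forall>n. H (n+1) \<in> {H n, H n + 1}" using H_step by auto
  have p4: "\<forall>n. H (n+1) = H n \<longleftrightarrow> F (n+1) = H n"
  proof
    fix n show "H (n+1) = H n \<longleftrightarrow> F (n+1) = H n"
      using H_step[of n] F_small[of n] F_large[of n] by auto
  qed
  have p5: "\<forall>n. H (n+1) = H n + 1 \<longleftrightarrow> F (n+1) = H n + n + 1"
  proof
    fix n show "H (n+1) = H n + 1 \<longleftrightarrow> F (n+1) = H n + n + 1"
      using H_step[of n] F_small[of n] F_large[of n] by auto
  qed
  have p6: "\<forall>n\<ge>1. H (H n) + H (n+1) = n + 2" using prop_f by blast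
  have p7: "\<forall>n. F (F n) = n" using F_inv by blast
  have p8: "\<forall>n\<ge>1. H (H n + n) = n + 1" using prop_h by blast
  have p9: "\<forall>n\<ge>1. int (H n) = \<lfloor>real n * phi\<rfloor> - int n + 1" using prop_i by blast
  have p10: "\<not> (\<exists>n1 n2 n3. n1 < n2 \<and> n2 < n3 \<and> H n1 = H n2 \<and> H n2 = H n3)"
  proof
    assume "\<exists>n1 n2 n3. n1 < n2 \<and> n2 < n3 \<and> H n1 = H n2 \<and> H n2 = H n3"
    then obtain n1 n2 n3 where a: "n1 < n2" "n2 < n3" "H n1 = H n2" "H n2 = H n3" by blast
    have "H (n1 + 2) \<le> H n3" using a by (intro H_monoD) simp
    then show False using prop_k[of n1] a by simp
  qed
  have p11: "\<forall>n. H (n+2) > H n" using prop_k by blast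
  have p12: "surj H" by (rule H_surj)
  have p13: "surj F" by (metis F_inv surjI)
  have p14: "inj F" by (rule F_inj)
  have p15: "\<forall>n\<ge>6. H n \<le> n - 2" using prop_o by blast
  have p16: "\<forall>n. F (n+1) > H n \<longrightarrow> (\<forall>j\<ge>n+1. F j > H n)" using prop_p by blast
  have p17: "\<not> (\<exists>k l. k \<ge> 2 \<and> F (k-1) = l \<and> F k = l + 1)" by (rule prop_q)
  show ?thesis unfolding f_F h_H using p1 p2 p3 p4 p5 p6 p7 p8 p9 p10 p11 p12 p13 p14 p15 p16 p17 by (intro conjI) assumption+
qed

end
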